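(* Let $e_1,\dots,e_T\in\mathbb{R}^d$, $E=[e_1,\dots,e_T]$, $T_0\in\{2,\dots,T\}$, and let $C=\operatorname{conv}\{e_t:t\in\{2,\dots,T\}\setminus\{T_0\}\}$ and $\gamma=\operatorname{dist}(e_{T_0},C)$. For any attention vector $a\in\mathbb{R}^T$ with $a_1=0$, $a_t\ge0$, $\sum_t a_t=1$ (in particular for $a=a(w)$ the shifted-softmax attention of any parameter $w$), let $r=Ea-e_{T_0}$. Then there exists a constant $K>0$ (independent of $a$) such that $$(1-a_{T_0})K\ge\|r\|\ge(1-a_{T_0})\gamma.$$ In particular, if $\gamma>0$ then along any family of parameters the per-sample squared error $\frac12\|r\|^2$ tends to $0$ if and only if $a_{T_0}\to1$, and the squared loss has no finite-norm minimizer achieving zero loss.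
   Context: The shifted-softmax attention of a parameter $w$ is $a_1(w)=0$, $a_{t+1}(w)=\exp(w^\top x_t)/\sum_{s=1}^{T-1}\exp(w^\top x_s)$ for $t=1,\dots,T-1$, where $x_t$ are fixed feature vectors; such attention vectors always have $a_{T_0}<1$. *)

theory Defs
  imports "HOL-Analysis.Analysis"
begin

text \<open>Attention vectors are functions on indices 1..T (values outside are irrelevant).\<close>
definition is_attention :: "nat \<Rightarrow> (nat \<Rightarrow> real) \<Rightarrow> bool" where
  "is_attention T a \<longleftrightarrow> a 1 = 0 \<and> (\<forall>t\<in>{1..T}. a t \<ge> 0) \<and> (\<Sum>t=1..T. a t) = 1"

definition Emat :: "nat \<Rightarrow> (nat \<Rightarrow> 'a::real_vector) \<Rightarrow> (nat \<Rightarrow> real) \<Rightarrow> 'a" where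
  "Emat T e a = (\<Sum>t=1..T. a t *\<^sub>R e t)"

definition shifted_softmax :: "nat \<Rightarrow> (nat \<Rightarrow> 'p::real_inner) \<Rightarrow> 'p \<Rightarrow> nat \<Rightarrow> real" where
  "shifted_softmax T x w t =
     (if 2 \<le> t \<and> t \<le> T then exp (w \<bullet> x (t - 1)) / (\<Sum>s=1..T-1. exp (w \<bullet> x s)) else 0)"

end

theory Submission
  imports Defs
begin

lemma att_decomp:
  fixes e :: "nat \<Rightarrow> 'a::real_vector"
  assumes att: "is_attention T a" and T0: "T0 \<in> {1..T}"
  shows "Emat T e a - e T0 = (\<Sum>t\<in>{1..T}-{T0}. a t *\<^sub>R (e t - e T0))"
    and "(\<Sum>t\<in>{1..T}-{T0}. a t) = 1 - a T0"
proof -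
  have s1: "(\<Sum>t=1..T. a t) = 1" using att by (simp add: is_attention_def)
  have r: "(\<Sum>t\<in>{1..T}. f t) = f T0 + (\<Sum>t\<in>{1..T}-{T0}. f t)" for f :: "nat \<Rightarrow> 'c::comm_monoid_add"
    using T0 by (simp add: sum.remove)
  show s2: "(\<Sum>t\<in>{1..T}-{T0}. a t) = 1 - a T0" using r[of a] s1 by simp
  have "Emat T e a - e T0 = (\<Sum>t\<in>{1..T}. a t *\<^sub>R e t) - (\<Sum>t\<in>{1..T}. a t) *\<^sub>R e T0"
    using s1 by (simp add: Emat_def)
  also have "\<dots> = (\<Sum>t\<in>{1..T}. a t *\<^sub>R (e t - e T0))"
    by (simp add: scaleR_sum_left sum_subtractf algebra_simps)
  also have "\<dots> = (\<Sum>t\<in>{1..T}-{T0}. a t *\<^sub>R (e t - e T0))"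
    using r[of "\<lambda>t. a t *\<^sub>R (e t - e T0)"] by simp
  finally show "Emat T e a - e T0 = (\<Sum>t\<in>{1..T}-{T0}. a t *\<^sub>R (e t - e T0))" .
qed

lemma att_le1:
  assumes att: "is_attention T a" and T0: "T0 \<in> {1..T}"
  shows "a T0 \<le> 1"
proof -
  have "a T0 \<le> (\<Sum>t=1..T. a t)"
    using att T0 by (intro member_le_sum) (auto simp: is_attention_def)
  thus ?thesis using att by (simp add: is_attention_def)
qed

lemma upper:
  fixes e :: "nat \<Rightarrow> 'a::real_normed_vector"
  assumes T0: "T0 \<in> {1..T}"
  shows "\<exists>K>0. \<forall>a. is_attention T a \<longrightarrow> (1 - a T0) * K \<ge> norm (Emat T e a - e T0)"
proof (intro exI conjI allI impI)
  define K where "K = 1 + (\<Sum>t\<in>{1..T}. norm (e t - e T0))"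
  show "K > 0" unfolding K_def by (smt (verit) sum_nonneg norm_ge_zero)
  fix a assume att: "is_attention T a"
  have nn: "\<And>t. t \<in> {1..T} \<Longrightarrow> a t \<ge> 0" using att by (auto simp: is_attention_def)
  have bd: "norm (e t - e T0) \<le> K" if "t \<in> {1..T}" for t
  proof -
    have "norm (e t - e T0) \<le> (\<Sum>t\<in>{1..T}. norm (e t - e T0))"
      using that by (intro member_le_sum) auto
    thus ?thesis unfolding K_def by simp
  qed
  have "norm (Emat T e a - e T0) \<le> (\<Sum>t\<in>{1..T}-{T0}. norm (a t *\<^sub>R (e t - e T0)))"
    unfolding att_decomp(1)[OF att T0] by (rule norm_sum)
  also have "\<dots> \<le> (\<Sum>t\<in>{1..T}-{T0}. a t * K)"
    using nn bd by (intro sum_mono) (auto intro: mult_left_mono)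
  also have "\<dots> = (1 - a T0) * K"
    using att_decomp(2)[OF att T0] by (simp add: sum_distrib_right[symmetric])
  finally show "(1 - a T0) * K \<ge> norm (Emat T e a - e T0)" .
qed

lemma lower:
  fixes e :: "nat \<Rightarrow> 'a::euclidean_space"
  assumes "2 \<le> T0" "T0 \<le> T" and att: "is_attention T a"
  shows "norm (Emat T e a - e T0) \<ge> (1 - a T0) * infdist (e T0) (convex hull (e ` ({2..T} - {T0})))"
proof (cases "a T0 = 1")
  case True thus ?thesis by simp
next
  case False
  have T0: "T0 \<in> {1..T}" using assms by auto
  have s: "1 - a T0 > 0" using att_le1[OF att T0] False by simp
  define s' where "s' = 1 - a T0"
  have nn: "\<And>t. t \<in> {1..T} \<Longrightarrow> a t \<ge> 0" using att by (auto simp: is_attention_def)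
  have a1: "a 1 = 0" using att by (simp add: is_attention_def)
  have split: "{1..T}-{T0} = insert 1 ({2..T}-{T0})" using assms by auto
  have eq2: "(\<Sum>t\<in>{1..T}-{T0}. f t) = f 1 + (\<Sum>t\<in>{2..T}-{T0}. f t)" for f :: "nat \<Rightarrow> 'c::comm_monoid_add"
    unfolding split by (subst sum.insert) auto
  define c where "c = (\<Sum>t\<in>{2..T}-{T0}. (a t / s') *\<^sub>R e t)"
  have sumw: "(\<Sum>t\<in>{2..T}-{T0}. a t) = s'"
    using att_decomp(2)[OF att T0] eq2[of a] a1 s'_def by simp
  have cin: "c \<in> convex hull (e ` ({2..T} - {T0}))"
    unfolding c_def
  proof (rule convex_sum)
    show "(\<Sum>i\<in>{2..T} - {T0}. a i / s') = 1"
      using sumw s s'_def by (simp add: sum_divide_distrib[symmetric])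
    show "\<And>i. i \<in> {2..T} - {T0} \<Longrightarrow> 0 \<le> a i / s'" using nn s s'_def by auto
    show "\<And>i. i \<in> {2..T} - {T0} \<Longrightarrow> e i \<in> convex hull e ` ({2..T} - {T0})"
      by (intro hull_inc) auto
  qed auto
  have "Emat T e a - e T0 = (\<Sum>t\<in>{2..T}-{T0}. a t *\<^sub>R (e t - e T0))"
    using att_decomp(1)[OF att T0, of e] eq2[of "\<lambda>t. a t *\<^sub>R (e t - e T0)"] a1
    by (simp only: numeral_1_eq_Suc_0 scaleR_zero_left add_0)
  also have "\<dots> = s' *\<^sub>R c - s' *\<^sub>R e T0"
  proof -
    have 1: "(\<Sum>t\<in>{2..T}-{T0}. a t *\<^sub>R e T0) = s' *\<^sub>R e T0"
      by (subst scaleR_sum_left[symmetric]) (rule arg_cong[OF sumw, of "\<lambda>u. u *\<^sub>R e T0"])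
    have 2: "s' *\<^sub>R c = (\<Sum>t\<in>{2..T}-{T0}. a t *\<^sub>R e t)"
      using s s'_def by (simp add: c_def scaleR_sum_right)
    show ?thesis unfolding 2 1[symmetric] by (simp only: scaleR_diff_right sum_subtractf)
  qed
  finally have "norm (Emat T e a - e T0) = s' * dist c (e T0)"
    using s s'_def by (simp add: dist_norm scaleR_diff_right[symmetric])
  moreover have "infdist (e T0) (convex hull (e ` ({2..T} - {T0}))) \<le> dist c (e T0)"
    using infdist_le[OF cin, of "e T0"] by (simp add: dist_commute)
  ultimately show ?thesis using s s'_def by (simp add: mult_left_mono)
qed

lemma softmax_att:
  fixes x :: "nat \<Rightarrow> 'p::real_inner"
  assumes "2 \<le> T"
  shows "is_attention T (shifted_softmax T x w)"
proof -
  define h where "h s = exp (w \<bullet> x s)" for s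
  define S where "S = (\<Sum>s=1..T-1. h s)"
  have Spos: "S > 0" unfolding S_def h_def using assms by (intro sum_pos) auto
  have "(\<Sum>t=1..T. shifted_softmax T x w t) = (\<Sum>t=2..T. h (t-1) / S)"
  proof -
    have "{1..T} = insert 1 {2..T}" using assms by auto
    thus ?thesis by (simp add: shifted_softmax_def h_def S_def)
  qed
  also have "\<dots> = (\<Sum>s=1..T-1. h s / S)"
    using sum.shift_bounds_cl_nat_ivl[of "\<lambda>t. h (t-1) / S" 1 1 "T-1"] assms
    by (simp add: numeral_2_eq_2)
  also have "\<dots> = 1" using Spos by (simp add: sum_divide_distrib[symmetric] S_def)
  finally have sum1: "(\<Sum>t=1..T. shifted_softmax T x w t) = 1" .
  have "\<forall>t\<in>{1..T}. 0 \<le> shifted_softmax T x w t"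
  proof
    fix t assume "t \<in> {1..T}"
    have "0 \<le> h (t-1) / S" using Spos unfolding h_def by simp
    thus "0 \<le> shifted_softmax T x w t" by (simp add: shifted_softmax_def h_def S_def)
  qed
  moreover have "shifted_softmax T x w 1 = 0" by (simp add: shifted_softmax_def)
  ultimately show ?thesis using sum1 unfolding is_attention_def by blast
qed

lemma tend_equiv:
  fixes R A :: "'b \<Rightarrow> real" and g K :: real
  assumes g: "g > 0" and lo: "\<And>i. (1 - A i) * g \<le> R i" and hi: "\<And>i. R i \<le> (1 - A i) * K"
    and le1: "\<And>i. A i \<le> 1"
  shows "((\<lambda>i. (1/2) * (R i)\<^sup>2) \<longlongrightarrow> 0) F \<longleftrightarrow> (A \<longlongrightarrow> 1) F"
proof -
  have Rnn: "R i \<ge> 0" for i using lo[of i] le1[of i] g by (smt (verit) mult_nonneg_nonneg)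
  have e1: "((\<lambda>i. (1/2) * (R i)\<^sup>2) \<longlongrightarrow> 0) F \<longleftrightarrow> (R \<longlongrightarrow> 0) F"
  proof
    assume h: "((\<lambda>i. (1/2) * (R i)\<^sup>2) \<longlongrightarrow> 0) F"
    have "((\<lambda>i. sqrt (2 * ((1/2) * (R i)\<^sup>2))) \<longlongrightarrow> sqrt (2 * 0)) F"
      by (intro tendsto_intros h)
    moreover have "sqrt (2 * ((1/2) * (R i)\<^sup>2)) = R i" for i using Rnn[of i] by simp
    ultimately show "(R \<longlongrightarrow> 0) F" by simp
  next
    assume h: "(R \<longlongrightarrow> 0) F"
    have "((\<lambda>i. (1/2) * (R i)\<^sup>2) \<longlongrightarrow> (1/2) * 0\<^sup>2) F"
      by (intro tendsto_intros h)
    thus "((\<lambda>i. (1/2) * (R i)\<^sup>2) \<longlongrightarrow> 0) F" by simp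
  qed
  have e2: "(R \<longlongrightarrow> 0) F \<longleftrightarrow> ((\<lambda>i. 1 - A i) \<longlongrightarrow> 0) F"
  proof
    assume h: "(R \<longlongrightarrow> 0) F"
    show "((\<lambda>i. 1 - A i) \<longlongrightarrow> 0) F"
    proof (rule tendsto_sandwich[of "\<lambda>_. 0" _ _ "\<lambda>i. R i / g"])
      show "\<forall>\<^sub>F n in F. 0 \<le> 1 - A n" using le1 by simp
      show "\<forall>\<^sub>F n in F. 1 - A n \<le> R n / g" using lo g by (simp add: pos_le_divide_eq)
      show "((\<lambda>i. R i / g) \<longlongrightarrow> 0) F" using tendsto_divide_zero[OF h] .
    qed simp
  next
    assume h: "((\<lambda>i. 1 - A i) \<longlongrightarrow> 0) F"
    show "(R \<longlongrightarrow> 0) F"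
    proof (rule tendsto_sandwich[of "\<lambda>_. 0" _ _ "\<lambda>i. (1 - A i) * K"])
      show "\<forall>\<^sub>F n in F. 0 \<le> R n" using Rnn by simp
      show "\<forall>\<^sub>F n in F. R n \<le> (1 - A n) * K" using hi by simp
      show "((\<lambda>i. (1 - A i) * K) \<longlongrightarrow> 0) F" using tendsto_mult_left_zero[OF h] .
    qed simp
  qed
  have e3: "((\<lambda>i. 1 - A i) \<longlongrightarrow> 0) F \<longleftrightarrow> (A \<longlongrightarrow> 1) F"
  proof
    assume h: "((\<lambda>i. 1 - A i) \<longlongrightarrow> 0) F"
    have "((\<lambda>i. 1 - (1 - A i)) \<longlongrightarrow> 1 - 0) F" by (intro tendsto_intros h)
    thus "(A \<longlongrightarrow> 1) F" by simp
  next
    assume h: "(A \<longlongrightarrow> 1) F"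
    have "((\<lambda>i. 1 - A i) \<longlongrightarrow> 1 - 1) F" by (intro tendsto_intros h)
    thus "((\<lambda>i. 1 - A i) \<longlongrightarrow> 0) F" by simp
  qed
  show ?thesis using e1 e2 e3 by simp
qed

theorem lemma4:
  fixes e :: "nat \<Rightarrow> 'a::euclidean_space" and T T0 :: nat
    and x :: "nat \<Rightarrow> 'p::real_inner"
  assumes "2 \<le> T0" and "T0 \<le> T"
  defines "C \<equiv> convex hull (e ` ({2..T} - {T0}))"
  defines "\<gamma> \<equiv> infdist (e T0) C"
  shows "(\<exists>K>0. \<forall>a. is_attention T a \<longrightarrow>
            (1 - a T0) * K \<ge> norm (Emat T e a - e T0) \<and>
            norm (Emat T e a - e T0) \<ge> (1 - a T0) * \<gamma>)
       \<and> (\<gamma> > 0 \<longrightarrow>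
            (\<forall>(F :: 'b filter) (w :: 'b \<Rightarrow> 'p).
               ((\<lambda>i. (1/2) * (norm (Emat T e (shifted_softmax T x (w i)) - e T0))\<^sup>2) \<longlongrightarrow> 0) F
               \<longleftrightarrow> ((\<lambda>i. shifted_softmax T x (w i) T0) \<longlongrightarrow> 1) F)
          \<and> (\<forall>w. (1/2) * (norm (Emat T e (shifted_softmax T x w) - e T0))\<^sup>2 > 0))"
proof -
  have T0: "T0 \<in> {1..T}" using assms by auto
  obtain K where K: "K > 0" "\<And>a. is_attention T a \<Longrightarrow> (1 - a T0) * K \<ge> norm (Emat T e a - e T0)"
    using upper[OF T0, of e] by blast
  have low: "\<And>a. is_attention T a \<Longrightarrow> norm (Emat T e a - e T0) \<ge> (1 - a T0) * \<gamma>"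
    using lower assms unfolding \<gamma>_def C_def by blast
  have P1: "\<exists>K>0. \<forall>a. is_attention T a \<longrightarrow>
            (1 - a T0) * K \<ge> norm (Emat T e a - e T0) \<and>
            norm (Emat T e a - e T0) \<ge> (1 - a T0) * \<gamma>"
    using K low by blast
  have att: "\<And>w. is_attention T (shifted_softmax T x w)" by (rule softmax_att) (use assms in simp)
  define A where "A w = shifted_softmax T x w T0" for w
  define R where "R w = norm (Emat T e (shifted_softmax T x w) - e T0)" for w
  have le1: "A w \<le> 1" for w unfolding A_def using att_le1[OF att T0] .
  have lo: "(1 - A w) * \<gamma> \<le> R w" for w unfolding A_def R_def using low[OF att] .
  have hi: "R w \<le> (1 - A w) * K" for w unfolding A_def R_def using K(2)[OF att] .
  have P2: "\<gamma> > 0 \<longrightarrow>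
            (\<forall>(F :: 'b filter) (w :: 'b \<Rightarrow> 'p).
               ((\<lambda>i. (1/2) * (R (w i))\<^sup>2) \<longlongrightarrow> 0) F
               \<longleftrightarrow> ((\<lambda>i. A (w i)) \<longlongrightarrow> 1) F)
          \<and> (\<forall>w. (1/2) * (R w)\<^sup>2 > 0)"
  proof
    assume g: "\<gamma> > 0"
    have "C \<noteq> {}" using g unfolding \<gamma>_def infdist_def by auto
    then have "{2..T} - {T0} \<noteq> {}" unfolding C_def by (metis convex_hull_empty image_empty)
    then obtain t' where t': "t' \<in> {2..T} - {T0}" by blast
    have lt1: "A w < 1" for w
    proof -
      let ?a = "shifted_softmax T x w"
      have Sp: "(\<Sum>s=1..T-1. exp (w \<bullet> x s)) > 0" using t' by (intro sum_pos) auto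
      have pos: "?a t' > 0" using t' Sp by (simp add: shifted_softmax_def)
      have "(\<Sum>t\<in>{T0, t'}. ?a t) \<le> (\<Sum>t=1..T. ?a t)"
        using t' T0 att[of w] by (intro sum_mono2) (auto simp: is_attention_def)
      also have "\<dots> = 1" using att[of w] by (simp add: is_attention_def)
      finally show ?thesis using t' pos unfolding A_def by auto
    qed
    show "(\<forall>(F :: 'b filter) (w :: 'b \<Rightarrow> 'p).
               ((\<lambda>i. (1/2) * (R (w i))\<^sup>2) \<longlongrightarrow> 0) F
               \<longleftrightarrow> ((\<lambda>i. A (w i)) \<longlongrightarrow> 1) F)
          \<and> (\<forall>w. (1/2) * (R w)\<^sup>2 > 0)"
    proof (intro conjI allI)
      fix F :: "'b filter" and w :: "'b \<Rightarrow> 'p"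
      show "((\<lambda>i. (1/2) * (R (w i))\<^sup>2) \<longlongrightarrow> 0) F \<longleftrightarrow> ((\<lambda>i. A (w i)) \<longlongrightarrow> 1) F"
        using tend_equiv[of \<gamma> "\<lambda>i. A (w i)" "\<lambda>i. R (w i)" K F] g lo hi le1 by blast
    next
      fix w
      have "(1 - A w) * \<gamma> > 0" using lt1[of w] g by simp
      hence "R w > 0" using lo[of w] by linarith
      thus "(1/2) * (R w)\<^sup>2 > 0" by simp
    qed
  qed
  show ?thesis using P1 P2 unfolding A_def R_def by blast
qed

end
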